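(* Let $L$ be a commutative C-loop and let $A$ be the subloop of $L$ generated by all associators $[x,y,z]$, $x,y,z\in L$. Then $a^2=e$ for every $a\in A$.
   Context: A C-loop is a loop satisfying $x(y(yz))=((xy)y)z$ for all $x,y,z$. The associator $[x,y,z]$ is the unique element $u$ with $(xy)z=(x(yz))u$. *)

theory Defs
  imports Main
begin

definition loop :: "('a \<Rightarrow> 'a \<Rightarrow> 'a) \<Rightarrow> 'a \<Rightarrow> bool" where
  "loop m e \<longleftrightarrow> (\<forall>x. m e x = x \<and> m x e = x)
     \<and> (\<forall>a b. \<exists>!x. m a x = b) \<and> (\<forall>a b. \<exists>!y. m y a = b)"

definition C_loop :: "('a \<Rightarrow> 'a \<Rightarrow> 'a) \<Rightarrow> 'a \<Rightarrow> bool" where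
  "C_loop m e \<longleftrightarrow> loop m e \<and>
     (\<forall>x y z. m x (m y (m y z)) = m (m (m x y) y) z)"

definition commutative_op :: "('a \<Rightarrow> 'a \<Rightarrow> 'a) \<Rightarrow> bool" where
  "commutative_op m \<longleftrightarrow> (\<forall>x y. m x y = m y x)"

definition ldiv :: "('a \<Rightarrow> 'a \<Rightarrow> 'a) \<Rightarrow> 'a \<Rightarrow> 'a \<Rightarrow> 'a" where
  "ldiv m a b = (THE x. m a x = b)"

definition rdiv :: "('a \<Rightarrow> 'a \<Rightarrow> 'a) \<Rightarrow> 'a \<Rightarrow> 'a \<Rightarrow> 'a" where
  "rdiv m b a = (THE y. m y a = b)"

definition associator :: "('a \<Rightarrow> 'a \<Rightarrow> 'a) \<Rightarrow> 'a \<Rightarrow> 'a \<Rightarrow> 'a \<Rightarrow> 'a" where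
  "associator m x y z = (THE u. m (m x y) z = m (m x (m y z)) u)"

definition subloop :: "('a \<Rightarrow> 'a \<Rightarrow> 'a) \<Rightarrow> 'a \<Rightarrow> 'a set \<Rightarrow> bool" where
  "subloop m e H \<longleftrightarrow> e \<in> H \<and> (\<forall>a\<in>H. \<forall>b\<in>H. m a b \<in> H \<and> ldiv m a b \<in> H \<and> rdiv m a b \<in> H)"

definition generated_subloop :: "('a \<Rightarrow> 'a \<Rightarrow> 'a) \<Rightarrow> 'a \<Rightarrow> 'a set \<Rightarrow> 'a set" where
  "generated_subloop m e S = \<Inter>{H. subloop m e H \<and> S \<subseteq> H}"

end

theory Submission
  imports Defs
begin

lemma sq_hom:
  fixes m :: "'a \<Rightarrow> 'a \<Rightarrow> 'a" and ld :: "'a \<Rightarrow> 'a \<Rightarrow> 'a"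
  assumes id1: "\<And>x. m e x = x" and c: "\<And>x y. m x y = m y x"
  and l1: "\<And>a b. m a (ld a b) = b" and l2: "\<And>a b. ld a (m a b) = b"
  and C: "\<And>x y z. m x (m y (m y z)) = m (m (m x y) y) z"
  shows "m (m x y) (m x y) = m (m x x) (m y y)"
  by (smt (verit) C c id1 l2)

theorem corollary5p3:
  fixes m :: "'a \<Rightarrow> 'a \<Rightarrow> 'a" and e :: 'a
  assumes "C_loop m e" and "commutative_op m"
  shows "\<forall>a \<in> generated_subloop m e {associator m x y z | x y z. True}. m a a = e"
proof -
  have lp: "loop m e" and C: "\<And>x y z. m x (m y (m y z)) = m (m (m x y) y) z"
    using assms(1) unfolding C_loop_def by auto
  have c: "\<And>x y. m x y = m y x" using assms(2) unfolding commutative_op_def by auto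
  have id1: "\<And>x. m e x = x" and id2: "\<And>x. m x e = x" using lp unfolding loop_def by auto
  have uL: "\<And>a b. \<exists>!x. m a x = b" using lp unfolding loop_def by auto
  have uR: "\<And>a b. \<exists>!y. m y a = b" using lp unfolding loop_def by auto
  have l1: "\<And>a b. m a (ldiv m a b) = b"
    unfolding ldiv_def using theI'[OF uL] .
  have l2: "\<And>a b. ldiv m a (m a b) = b"
  proof -
    fix a b
    show "ldiv m a (m a b) = b" using uL[of a "m a b"] l1[of a "m a b"] by blast
  qed
  have canc: "\<And>a x y. m a x = m a y \<Longrightarrow> x = y" using l2 by (metis (no_types))
  have sq: "\<And>x y. m (m x y) (m x y) = m (m x x) (m y y)"
    using sq_hom[OF id1 c l1 l2 C] .
  have LA: "\<And>y z. m y (m y z) = m (m y y) z" using C[of e] id1 by simp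
  have RA: "\<And>x y. m (m x y) y = m x (m y y)" using C[of _ _ e] id2 by simp
  let ?T = "{a. m a a = e}"
  have sub: "subloop m e ?T"
    unfolding subloop_def
  proof (intro conjI ballI)
    show "e \<in> ?T" using id1 by simp
  next
    fix a b assume a: "a \<in> ?T" and b: "b \<in> ?T"
    then have aa: "m a a = e" and bb: "m b b = e" by auto
    show ab: "m a b \<in> ?T" using sq aa bb id1 by simp
    have "ldiv m a b = m a b"
      unfolding ldiv_def
    proof (rule the_equality)
      show "m a (m a b) = b" using LA aa id1 by simp
      fix x assume "m a x = b"
      then have "m a x = m a (m a b)" using LA aa id1 by simp
      then show "x = m a b" by (rule canc)
    qed
    then show "ldiv m a b \<in> ?T" using ab by simp
    have "rdiv m a b = m a b"
      unfolding rdiv_def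
    proof (rule the_equality)
      show "m (m a b) b = a" using RA bb id2 by simp
      fix y assume "m y b = a"
      then have "m y b = m (m a b) b" using RA bb id2 by simp
      then show "y = m a b" using uR by blast
    qed
    then show "rdiv m a b \<in> ?T" using ab by simp
  qed
  have assoc: "associator m x y z \<in> ?T" for x y z
  proof -
    define u where "u = associator m x y z"
    have hu: "m (m x y) z = m (m x (m y z)) u"
    proof -
      have "\<exists>!u. m (m x y) z = m (m x (m y z)) u"
        using uL[of "m x (m y z)" "m (m x y) z"] by (metis (no_types))
      from theI'[OF this] show ?thesis by (simp add: u_def associator_def)
    qed
    have "m (m (m x y) z) (m (m x y) z) = m (m (m x (m y z)) (m x (m y z))) (m u u)"
      using hu sq[of "m x (m y z)" u] by simp
    also have "m (m (m x y) z) (m (m x y) z) = m (m (m x x) (m y y)) (m z z)"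
      using sq[of "m x y" z] sq[of x y] by simp
    also have "m (m (m x (m y z)) (m x (m y z))) (m u u) = m (m (m x x) (m (m y y) (m z z))) (m u u)"
      using sq[of x "m y z"] sq[of y z] by simp
    finally have F: "m (m (m x x) (m y y)) (m z z) = m (m (m x x) (m (m y y) (m z z))) (m u u)" .
    have "m (m (m x x) (m (m y y) (m z z))) e = m (m (m x x) (m (m y y) (m z z))) (m u u)"
    proof -
      have mid: "\<And>p q w. m p (m (m q q) w) = m (m p (m q q)) w" 
        by (metis C LA RA)
      have M: "m (m x x) (m (m y y) (m z z)) = m (m (m x x) (m y y)) (m z z)"
        using mid[of "m x x" y "m z z"] .
      show ?thesis unfolding id2 using F unfolding M[symmetric] .
    qed
    then show ?thesis using canc u_def by fastforce
  qed
  show ?thesis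
    unfolding generated_subloop_def using sub assoc by blast
qed

end
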